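(* For every $\delta\in(0,\delta_0]$ and every $r>0$, $$K(r)\le\Big(\frac{2}{C_1}\Big)^{2/\alpha}\frac{r^2\vee\delta^2}{\delta^2}K^{(\delta)}(r),\qquad h^{(\delta)}(r)\le h(r)\le\Big(\frac{2}{C_1}\Big)^{4/\alpha}\frac{r^2\vee\delta^2}{\delta^2}K^{(\delta)}(r),$$ and $$h^{(\delta)}(r)\le 4\Big(\frac{2}{C_1}\Big)^{4/\alpha}K^{(\delta)}(r).$$
   Context: Let $\nu:\mathbb{R}\setminus\{0\}\to[0,\infty)$ be a symmetric density of an infinite Lévy measure ($\int(x^2\wedge1)\nu(x)dx<\infty$, $\int\nu=\infty$), such that for some $\eta_4>0$, $\nu\in C^1(0,\eta_4)$, $\nu'<0$ on $(0,\eta_4)$ and $-\nu'(x)/x$ is decreasing on $(0,\eta_4)$. Let $\psi(\xi)=\int(1-\cos(\xi x))\nu(x)dx$ satisfy the weak lower scaling condition $\psi(\lambda\theta)\ge\underline{C}\lambda^\alpha\psi(\theta)$ ($\lambda\ge1,\theta\ge0$) and weak upper scaling condition $\psi(\lambda\theta)\le\overline{C}\lambda^\beta\psi(\theta)$ ($\lambda\ge1,\theta\ge1$), where $0<\alpha\le\beta<2$, $\underline{C},\overline{C}>0$. Put $C_1=\underline{C}/\pi^2$. Truncation: there is $\delta_0\in(0,1/24]$ such that for each $\delta\in(0,\delta_0]$ one fixes a function $\mu^{(\delta)}:\mathbb{R}\setminus\{0\}\to[0,\infty)$ with $\mu^{(\delta)}=\nu$ on $(0,\delta]$, $\mu^{(\delta)}(x)\in[0,\nu(x)]$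 on $(\delta,2\delta)$, $\mu^{(\delta)}=0$ on $[2\delta,\infty)$, $\mu^{(\delta)}\in C^1(0,\infty)$, $(\mu^{(\delta)})'\le0$ on $(0,\infty)$, $-(\mu^{(\delta)})'(x)/x$ nonincreasing on $(0,\infty)$, and $\mu^{(\delta)}(-x)=\mu^{(\delta)}(x)$. For $r>0$: $h(r)=\int_{\mathbb{R}}(1\wedge x^2r^{-2})\nu(x)dx$, $h^{(\delta)}(r)=\int_{\mathbb{R}}(1\wedge x^2r^{-2})\mu^{(\delta)}(x)dx$, $K(r)=\int_{|x|\le r}x^2r^{-2}\nu(x)dx$, $K^{(\delta)}(r)=\int_{|x|\le r}x^2r^{-2}\mu^{(\delta)}(x)dx$. *)

theory Defs
  imports "HOL-Analysis.Analysis"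
begin

text \<open>Densities are functions real => real; their value at 0 is irrelevant
(a Lebesgue null set). Integrals are Lebesgue (Bochner) integrals over lborel.\<close>

definition levy_psi :: "(real \<Rightarrow> real) \<Rightarrow> real \<Rightarrow> real" where
  "levy_psi \<nu> \<xi> = (LINT x|lborel. (1 - cos (\<xi> * x)) * \<nu> x)"

definition levy_h :: "(real \<Rightarrow> real) \<Rightarrow> real \<Rightarrow> real" where
  "levy_h \<nu> r = (LINT x|lborel. min 1 (x\<^sup>2 / r\<^sup>2) * \<nu> x)"

definition levy_K :: "(real \<Rightarrow> real) \<Rightarrow> real \<Rightarrow> real" where
  "levy_K \<nu> r = (LINT x:{x. \<bar>x\<bar> \<le> r}|lborel. x\<^sup>2 / r\<^sup>2 * \<nu> x)"

end

theory Submission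
  imports Defs
begin
lemma sin_upper5: fixes u::real assumes "0 \<le> u" shows "sin u \<le> u - u^3/6 + u^5/120"
proof -
  have "\<bar>sin u - (\<Sum>m<5. sin_coeff m * u ^ m)\<bar> \<le> inverse (fact 5) * \<bar>u\<bar> ^ 5"
    by (rule Maclaurin_sin_bound)
  moreover have "(\<Sum>m<5. sin_coeff m * u ^ m) = u - u^3/6"
  proof -
    have e: "{..<5::nat} = {0,1,2,3,4}" by auto
    show ?thesis unfolding e by (simp add: sin_coeff_def fact_numeral)
  qed
  ultimately have "\<bar>sin u - (u - u^3/6)\<bar> \<le> u^5/120" using assms by (simp add: fact_numeral)
  then show ?thesis unfolding abs_le_iff by linarith
qed
lemma one_minus_cos_le: fixes v::real shows "1 - cos v \<le> v^2/2"
proof -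
  have "cos v = 1 - 2 * (sin (v/2))^2" using cos_double_sin[of "v/2"] by simp
  moreover have "\<bar>sin (v/2)\<bar> \<le> \<bar>v/2\<bar>" by (rule abs_sin_x_le_abs_x)
  hence "(sin (v/2))^2 \<le> (v/2)^2" by (metis abs_le_square_iff)
  ultimately show ?thesis by (simp add: power_divide)
qed

lemma g_pos: fixes u::real assumes "0 < u" shows "(13/100) * min 1 (u^2) \<le> 1 - sin u / u"
proof (cases "u \<le> 1")
  case True
  have s: "sin u \<le> u - u^3/6 + u^5/120" using sin_upper5 assms by simp
  have "u^5 \<le> u^3" using True assms by (simp add: power_decreasing)
  moreover have "0 \<le> u^3" using assms by simp
  ultimately have "(13/100) * u^3 \<le> u - sin u" using s by linarith
  hence "(13/100) * u^2 \<le> (u - sin u)/u" using assms by (simp add: field_simps power_eq_if)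
  moreover have "(u - sin u)/u = 1 - sin u / u" using assms by (simp add: field_simps)
  moreover have "min 1 (u^2) = u^2" using True assms by (simp add: power_le_one)
  ultimately show ?thesis by simp
next
  case False
  have "sin u \<le> (87/100) * u"
  proof (cases "u \<le> 23/20")
    case True
    have s: "sin u \<le> u - u^3/6 + u^5/120" using sin_upper5 assms by simp
    have w1: "1 \<le> u^2" using False by (simp add: one_le_power)
    have w2: "u^2 \<le> (23/20)^2" using True assms by (simp add: power_mono)
    have "u^4 = u^2*u^2" by algebra
    hence w3: "u^4 \<le> (23/20)^2 * (23/20)^2" using w1 w2 by (metis mult_mono' order_trans zero_le_one zero_le_power2)
    have "u - u^3/6 + u^5/120 = u * (1 - u^2/6 + u^4/120)" by algebra
    moreover have "(23/20::real)^2 * (23/20)^2 = 279841/160000" by (simp add: power2_eq_square)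
    moreover have "1 - u^2/6 + u^4/120 \<le> 87/100" using w1 w3 calculation(2) by linarith
    moreover have "u * (1 - u^2/6 + u^4/120) \<le> u * (87/100)"
      using calculation(3) assms by (intro mult_left_mono) auto
    ultimately show ?thesis using s by linarith
  next
    case F2: False
    then show ?thesis using sin_le_one[of u] by linarith
  qed
  hence "87/100 \<ge> sin u / u" using assms by (simp add: field_simps)
  moreover have "min 1 (u^2) = 1" using False by (simp add: one_le_power)
  ultimately show ?thesis by simp
qed

lemma g_bound: fixes u::real assumes "u \<noteq> 0" shows "(13/100) * min 1 (u^2) \<le> 1 - sin u / u"
proof (cases "u > 0")
  case True then show ?thesis by (rule g_pos)
next
  case False
  hence "-u > 0" using assms by simp
  from g_pos[OF this] show ?thesis by simp
qed

lemma t_integral: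
  fixes x a :: real assumes "x \<noteq> 0" "0 < a"
  shows "(\<integral>\<^sup>+t. ennreal (indicator {0..a} t * (1 - cos (t * x))) \<partial>lborel) = ennreal (a - sin (a * x) / x)"
proof -
  have "((\<lambda>t. 1 - cos (t * x)) has_integral ((a - sin (a * x) / x) - (0 - sin (0 * x) / x))) {0..a}"
  proof (rule fundamental_theorem_of_calculus)
    show "0 \<le> a" using assms by simp
    fix t assume "t \<in> {0..a}"
    have "((\<lambda>t. t - sin (t * x) / x) has_real_derivative (1 - cos (t * x) * x / x)) (at t)"
      by (auto intro!: derivative_eq_intros)
    then show "((\<lambda>t. t - sin (t * x) / x) has_vector_derivative (1 - cos (t * x))) (at t within {0..a})"
      using assms by (simp add: has_real_derivative_iff_has_vector_derivative[symmetric] has_field_derivative_at_within)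
  qed
  then have I: "((\<lambda>t. 1 - cos (t * x)) has_integral (a - sin (a * x) / x)) {0..a}" by simp
  have "integral\<^sup>N lborel (\<lambda>t. indicator {0..a} t * (1 - cos (t * x))) = a - sin (a * x) / x"
    by (rule nn_integral_has_integral_lebesgue[OF _ I]) simp
  then show ?thesis by simp
qed
lemma psi_integrable:
  fixes \<nu> :: "real \<Rightarrow> real"
  assumes meas: "\<nu> \<in> borel_measurable borel" and nn: "AE x in lborel. 0 \<le> \<nu> x"
    and levy: "integrable lborel (\<lambda>x. min (x\<^sup>2) 1 * \<nu> x)"
    and fm: "f \<in> borel_measurable borel" and fb: "\<And>x. \<bar>f x\<bar> \<le> C * min (x\<^sup>2) 1"
  shows "integrable lborel (\<lambda>x. f x * \<nu> x)"
proof (rule Bochner_Integration.integrable_bound[OF integrable_mult_right[OF levy, of C]])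
  show "(\<lambda>x. f x * \<nu> x) \<in> borel_measurable lborel" using fm meas by simp
  show "AE x in lborel. norm (f x * \<nu> x) \<le> norm (C * (min (x\<^sup>2) 1 * \<nu> x))"
    using nn
  proof eventually_elim
    case (elim x)
    have "\<bar>f x * \<nu> x\<bar> = \<bar>f x\<bar> * \<nu> x" using elim by (simp add: abs_mult)
    also have "\<dots> \<le> C * min (x\<^sup>2) 1 * \<nu> x" using elim fb[of x] by (simp add: mult_right_mono)
    also have "\<dots> \<le> \<bar>C * (min (x\<^sup>2) 1 * \<nu> x)\<bar>" by (simp add: mult.assoc)
    finally show ?case by simp
  qed
qed

lemma avg_bound:
  fixes \<nu> :: "real \<Rightarrow> real" and s B :: real
  assumes meas: "\<nu> \<in> borel_measurable borel" and nn: "AE x in lborel. 0 \<le> \<nu> x"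
    and levy: "integrable lborel (\<lambda>x. min (x\<^sup>2) 1 * \<nu> x)"
    and s: "0 < s"
    and bnd: "\<And>t. 0 \<le> t \<Longrightarrow> t \<le> 1/s \<Longrightarrow> levy_psi \<nu> t \<le> B"
  shows "(13/100) * levy_h \<nu> s \<le> B"
proof -
  note meas[measurable]
  define a where "a = 1/s"
  have a: "0 < a" "s * a = 1" using s by (auto simp: a_def)
  have B0: "0 \<le> B" using bnd[of 0] s by (simp add: levy_psi_def)
  have hI: "integrable lborel (\<lambda>x. min 1 (x\<^sup>2 / s\<^sup>2) * \<nu> x)"
  proof (rule psi_integrable[OF meas nn levy, where C = "max 1 (1/s\<^sup>2)"])
    show "(\<lambda>x. min 1 (x\<^sup>2 / s\<^sup>2)) \<in> borel_measurable borel" by simp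
    fix x :: real
    show "\<bar>min 1 (x\<^sup>2 / s\<^sup>2)\<bar> \<le> max 1 (1/s\<^sup>2) * min (x\<^sup>2) 1"
    proof (cases "x\<^sup>2 \<le> 1")
      case True
      have "min 1 (x\<^sup>2 / s\<^sup>2) \<le> x\<^sup>2 * (1/s\<^sup>2)" by simp
      also have "\<dots> \<le> x\<^sup>2 * max 1 (1/s\<^sup>2)" by (intro mult_left_mono) auto
      finally show ?thesis using True by (simp add: mult.commute)
    next
      case False
      then show ?thesis by simp
    qed
  qed
  have psiI: "integrable lborel (\<lambda>x. (1 - cos (t * x)) * \<nu> x)" for t
  proof (rule psi_integrable[OF meas nn levy, where C = "max 2 (t\<^sup>2)"])
    show "(\<lambda>x. 1 - cos (t * x)) \<in> borel_measurable borel" by simp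
    fix x :: real
    show "\<bar>1 - cos (t * x)\<bar> \<le> max 2 (t\<^sup>2) * min (x\<^sup>2) 1"
    proof (cases "x\<^sup>2 \<le> 1")
      case True
      have "1 - cos (t * x) \<le> (t*x)^2/2" by (rule one_minus_cos_le)
      also have "\<dots> \<le> t\<^sup>2 * x\<^sup>2" by (simp add: power_mult_distrib)
      also have "\<dots> \<le> max 2 (t\<^sup>2) * x\<^sup>2" by (intro mult_right_mono) auto
      finally show ?thesis using True cos_le_one[of "t*x"] by simp
    next
      case False
      have "1 - cos (t * x) \<le> 2" using cos_ge_minus_one[of "t*x"] by linarith
      also have "2 \<le> max 2 (t\<^sup>2)" by simp
      finally show ?thesis using False cos_le_one[of "t*x"] by simp
    qed
  qed
  have psi_nn: "(\<integral>\<^sup>+x. ennreal ((1 - cos (t * x)) * \<nu> x) \<partial>lborel) = ennreal (levy_psi \<nu> t)" for t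
    unfolding levy_psi_def
    by (rule nn_integral_eq_integral[OF psiI]) (use nn in \<open>auto\<close>)
  have "ennreal ((13/100) * levy_h \<nu> s) = (\<integral>\<^sup>+x. ennreal ((13/100) * (min 1 (x\<^sup>2 / s\<^sup>2) * \<nu> x)) \<partial>lborel)"
    unfolding levy_h_def
    by (rule nn_integral_eq_integral[OF integrable_mult_right[OF hI], symmetric, simplified])
       (use nn in \<open>auto\<close>)
  also have "\<dots> \<le> (\<integral>\<^sup>+x. ennreal s * ((\<integral>\<^sup>+t. ennreal (indicator {0..a} t * (1 - cos (t * x))) \<partial>lborel) * ennreal (\<nu> x)) \<partial>lborel)"
  proof (rule nn_integral_mono)
    fix x :: real
    show "ennreal ((13/100) * (min 1 (x\<^sup>2 / s\<^sup>2) * \<nu> x)) \<le> ennreal s * ((\<integral>\<^sup>+t. ennreal (indicator {0..a} t * (1 - cos (t * x))) \<partial>lborel) * ennreal (\<nu> x))"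
    proof (cases "x = 0")
      case True then show ?thesis by simp
    next
      case False
      have g: "(13/100) * min 1 ((a*x)\<^sup>2) \<le> 1 - sin (a*x) / (a*x)"
        by (rule g_bound) (use False a in auto)
      have "(a*x)\<^sup>2 = x\<^sup>2 / s\<^sup>2" by (simp add: a_def power_divide)
      moreover have "s * (a - sin (a * x) / x) = 1 - sin (a*x) / (a*x)" using a s by (simp add: a_def field_simps)
      ultimately have g': "(13/100) * min 1 (x\<^sup>2 / s\<^sup>2) \<le> s * (a - sin (a * x) / x)" using g by simp
      have "ennreal ((13/100) * (min 1 (x\<^sup>2 / s\<^sup>2) * \<nu> x)) = ennreal ((13/100) * min 1 (x\<^sup>2 / s\<^sup>2)) * ennreal (\<nu> x)"
        by (subst ennreal_mult'[symmetric]) (auto simp: mult.assoc)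
      also have "\<dots> \<le> ennreal (s * (a - sin (a * x) / x)) * ennreal (\<nu> x)"
        by (intro mult_right_mono ennreal_leI g') simp
      also have "\<dots> = ennreal s * (ennreal (a - sin (a * x) / x) * ennreal (\<nu> x))"
        using s by (simp add: ennreal_mult' mult.assoc)
      finally show ?thesis using t_integral[OF False a(1)] by simp
    qed
  qed
  also have "\<dots> = ennreal s * (\<integral>\<^sup>+x. (\<integral>\<^sup>+t. ennreal (indicator {0..a} t * (1 - cos (t * x))) * ennreal (\<nu> x) \<partial>lborel) \<partial>lborel)"
  proof -
    have m: "(\<lambda>x. (\<integral>\<^sup>+t. ennreal (indicator {0..a} t * (1 - cos (t * x))) \<partial>lborel) * ennreal (\<nu> x)) \<in> borel_measurable lborel"
      by measurable
    show ?thesis by (subst nn_integral_cmult[OF m]) (auto simp: nn_integral_multc)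
  qed
  also have "(\<integral>\<^sup>+x. (\<integral>\<^sup>+t. ennreal (indicator {0..a} t * (1 - cos (t * x))) * ennreal (\<nu> x) \<partial>lborel) \<partial>lborel)
      = (\<integral>\<^sup>+t. (\<integral>\<^sup>+x. ennreal (indicator {0..a} t * (1 - cos (t * x))) * ennreal (\<nu> x) \<partial>lborel) \<partial>lborel)"
    by (rule lborel_pair.Fubini'[symmetric]) measurable
  also have "\<dots> \<le> (\<integral>\<^sup>+t. ennreal B * indicator {0..a} t \<partial>lborel)"
  proof (rule nn_integral_mono)
    fix t :: real
    show "(\<integral>\<^sup>+x. ennreal (indicator {0..a} t * (1 - cos (t * x))) * ennreal (\<nu> x) \<partial>lborel) \<le> ennreal B * indicator {0..a} t"
    proof (cases "t \<in> {0..a}")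
      case True
      have "(\<integral>\<^sup>+x. ennreal (indicator {0..a} t * (1 - cos (t * x))) * ennreal (\<nu> x) \<partial>lborel)
          = (\<integral>\<^sup>+x. ennreal ((1 - cos (t * x)) * \<nu> x) \<partial>lborel)"
        using True by (intro nn_integral_cong) (simp add: ennreal_mult')
      also have "\<dots> = ennreal (levy_psi \<nu> t)" by (rule psi_nn)
      also have "\<dots> \<le> ennreal B" using bnd[of t] True by (auto simp: a_def intro!: ennreal_leI)
      finally show ?thesis using True by simp
    next
      case False then show ?thesis by simp
    qed
  qed
  also have "\<dots> = ennreal B * ennreal a" using a by (simp add: nn_integral_cmult_indicator)
  finally have "ennreal ((13/100) * levy_h \<nu> s) \<le> ennreal s * (ennreal B * ennreal a)"
    by (simp add: mult_left_mono)
  also have "\<dots> = ennreal B" using a s B0 by (simp add: ennreal_mult'[symmetric] mult.commute mult.left_commute)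
  finally show ?thesis using B0 by (simp add: ennreal_le_iff)
qed
lemma levy_K_eq: "levy_K \<rho> r = (LINT x|lborel. indicator {x. \<bar>x\<bar> \<le> r} x * (x\<^sup>2 / r\<^sup>2 * \<rho> x))"
  by (simp add: levy_K_def set_lebesgue_integral_def)

lemma h_integrable:
  fixes \<rho> :: "real \<Rightarrow> real"
  assumes meas: "\<rho> \<in> borel_measurable borel" and nn: "AE x in lborel. 0 \<le> \<rho> x"
    and levy: "integrable lborel (\<lambda>x. min (x\<^sup>2) 1 * \<rho> x)" and r: "0 < r"
  shows "integrable lborel (\<lambda>x. min 1 (x\<^sup>2 / r\<^sup>2) * \<rho> x)"
proof (rule psi_integrable[OF meas nn levy, where C = "max 1 (1/r\<^sup>2)"])
  show "(\<lambda>x. min 1 (x\<^sup>2 / r\<^sup>2)) \<in> borel_measurable borel" by simp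
  fix x :: real
  show "\<bar>min 1 (x\<^sup>2 / r\<^sup>2)\<bar> \<le> max 1 (1/r\<^sup>2) * min (x\<^sup>2) 1"
  proof (cases "x\<^sup>2 \<le> 1")
    case True
    have "min 1 (x\<^sup>2 / r\<^sup>2) \<le> x\<^sup>2 * (1/r\<^sup>2)" by simp
    also have "\<dots> \<le> x\<^sup>2 * max 1 (1/r\<^sup>2)" by (intro mult_left_mono) auto
    finally show ?thesis using True by (simp add: mult.commute)
  next
    case False
    then show ?thesis by simp
  qed
qed

lemma K_integrable:
  fixes \<rho> :: "real \<Rightarrow> real"
  assumes meas: "\<rho> \<in> borel_measurable borel" and nn: "AE x in lborel. 0 \<le> \<rho> x"
    and levy: "integrable lborel (\<lambda>x. min (x\<^sup>2) 1 * \<rho> x)" and r: "0 < r"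
  shows "integrable lborel (\<lambda>x. indicator {x. \<bar>x\<bar> \<le> r} x * (x\<^sup>2 / r\<^sup>2 * \<rho> x))"
proof -
  have "integrable lborel (\<lambda>x. (indicator {x. \<bar>x\<bar> \<le> r} x * (x\<^sup>2 / r\<^sup>2)) * \<rho> x)"
  proof (rule psi_integrable[OF meas nn levy, where C = "max 1 (1/r\<^sup>2)"])
    show "(\<lambda>x. indicator {x. \<bar>x\<bar> \<le> r} x * (x\<^sup>2 / r\<^sup>2)) \<in> borel_measurable borel" by measurable
    fix x :: real
    show "\<bar>indicator {x. \<bar>x\<bar> \<le> r} x * (x\<^sup>2 / r\<^sup>2)\<bar> \<le> max 1 (1/r\<^sup>2) * min (x\<^sup>2) 1"
    proof (cases "\<bar>x\<bar> \<le> r")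
      case True
      have "x\<^sup>2 \<le> r\<^sup>2" using power_mono[OF True abs_ge_zero, of 2] by simp
      hence a: "x\<^sup>2 / r\<^sup>2 \<le> 1" using r by simp
      have b: "x\<^sup>2 / r\<^sup>2 \<le> max 1 (1/r\<^sup>2) * x\<^sup>2"
      proof -
        have "x\<^sup>2 / r\<^sup>2 = x\<^sup>2 * (1/r\<^sup>2)" by simp
        also have "\<dots> \<le> x\<^sup>2 * max 1 (1/r\<^sup>2)" by (intro mult_left_mono) auto
        finally show ?thesis by (simp add: mult.commute)
      qed
      show ?thesis using True a b by (auto simp: min_def)
    next
      case False
      then show ?thesis by simp
    qed
  qed
  then show ?thesis by (simp add: mult.assoc)
qed

lemma K_le_h:
  fixes \<rho> :: "real \<Rightarrow> real"
  assumes meas: "\<rho> \<in> borel_measurable borel" and nn: "AE x in lborel. 0 \<le> \<rho> x"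
    and levy: "integrable lborel (\<lambda>x. min (x\<^sup>2) 1 * \<rho> x)" and r: "0 < r"
  shows "levy_K \<rho> r \<le> levy_h \<rho> r"
  unfolding levy_K_eq levy_h_def
proof (rule integral_mono_AE[OF K_integrable[OF assms] h_integrable[OF assms]])
  show "AE x in lborel. indicator {x. \<bar>x\<bar> \<le> r} x * (x\<^sup>2 / r\<^sup>2 * \<rho> x) \<le> min 1 (x\<^sup>2 / r\<^sup>2) * \<rho> x"
    using nn
  proof eventually_elim
    case (elim x)
    show ?case
    proof (cases "\<bar>x\<bar> \<le> r")
      case True
      have "x\<^sup>2 \<le> r\<^sup>2" using power_mono[OF True abs_ge_zero, of 2] by simp
      hence "x\<^sup>2 / r\<^sup>2 \<le> 1" using r by simp
      then show ?thesis using True by (simp add: min_def)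
    next
      case False then show ?thesis using elim by simp
    qed
  qed
qed

lemma h_nonneg:
  fixes \<rho> :: "real \<Rightarrow> real"
  assumes nn: "AE x in lborel. 0 \<le> \<rho> x"
  shows "0 \<le> levy_h \<rho> r"
  unfolding levy_h_def by (rule integral_nonneg_AE) (use nn in \<open>eventually_elim, simp\<close>)

lemma K_nonneg:
  fixes \<rho> :: "real \<Rightarrow> real"
  assumes nn: "AE x in lborel. 0 \<le> \<rho> x"
  shows "0 \<le> levy_K \<rho> r"
  unfolding levy_K_eq by (rule integral_nonneg_AE) (use nn in \<open>eventually_elim, simp\<close>)

lemma h_mono:
  fixes \<rho> :: "real \<Rightarrow> real"
  assumes meas: "\<rho> \<in> borel_measurable borel" and nn: "AE x in lborel. 0 \<le> \<rho> x"
    and levy: "integrable lborel (\<lambda>x. min (x\<^sup>2) 1 * \<rho> x)" and r: "0 < r" and rr: "r \<le> r'"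
  shows "levy_h \<rho> r' \<le> levy_h \<rho> r"
  unfolding levy_h_def
proof (rule integral_mono_AE[OF h_integrable[OF meas nn levy] h_integrable[OF meas nn levy r]])
  show "0 < r'" using r rr by simp
  show "AE x in lborel. min 1 (x\<^sup>2 / r'\<^sup>2) * \<rho> x \<le> min 1 (x\<^sup>2 / r\<^sup>2) * \<rho> x"
    using nn
  proof eventually_elim
    case (elim x)
    have "r\<^sup>2 \<le> r'\<^sup>2" using r rr by (simp add: power_mono)
    hence "x\<^sup>2 / r'\<^sup>2 \<le> x\<^sup>2 / r\<^sup>2" using r by (simp add: frac_le)
    hence "min 1 (x\<^sup>2 / r'\<^sup>2) \<le> min 1 (x\<^sup>2 / r\<^sup>2)" by simp
    then show ?case using elim by (simp add: mult_right_mono)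
  qed
qed
lemma psi_nonneg:
  fixes \<rho> :: "real \<Rightarrow> real"
  assumes nn: "AE x in lborel. 0 \<le> \<rho> x"
  shows "0 \<le> levy_psi \<rho> t"
  unfolding levy_psi_def by (rule integral_nonneg_AE) (use nn in \<open>eventually_elim, simp\<close>)

lemma psi_upper:
  fixes \<nu> :: "real \<Rightarrow> real"
  assumes meas: "\<nu> \<in> borel_measurable borel" and nn: "AE x in lborel. 0 \<le> \<nu> x"
    and levy: "integrable lborel (\<lambda>x. min (x\<^sup>2) 1 * \<nu> x)" and s: "0 < s"
  shows "levy_psi \<nu> (L / s) \<le> (L\<^sup>2 / 2) * levy_K \<nu> s + 2 * levy_h \<nu> s"
proof -
  have KI: "integrable lborel (\<lambda>x. indicator {x. \<bar>x\<bar> \<le> s} x * (x\<^sup>2 / s\<^sup>2 * \<nu> x))"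
    by (rule K_integrable[OF meas nn levy s])
  have hI: "integrable lborel (\<lambda>x. min 1 (x\<^sup>2 / s\<^sup>2) * \<nu> x)"
    by (rule h_integrable[OF meas nn levy s])
  have pI: "integrable lborel (\<lambda>x. (1 - cos (L / s * x)) * \<nu> x)"
  proof (rule psi_integrable[OF meas nn levy, where C = "max 2 ((L/s)\<^sup>2)"])
    show "(\<lambda>x. 1 - cos (L / s * x)) \<in> borel_measurable borel" by simp
    fix x :: real
    show "\<bar>1 - cos (L/s * x)\<bar> \<le> max 2 ((L/s)\<^sup>2) * min (x\<^sup>2) 1"
    proof (cases "x\<^sup>2 \<le> 1")
      case True
      have "1 - cos (L/s * x) \<le> (L/s*x)^2/2" by (rule one_minus_cos_le)
      also have "\<dots> \<le> (L/s)\<^sup>2 * x\<^sup>2" by (simp only: power_mult_distrib) (simp add: zero_le_mult_iff)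
      also have "\<dots> \<le> max 2 ((L/s)\<^sup>2) * x\<^sup>2" by (intro mult_right_mono) auto
      finally show ?thesis using True cos_le_one[of "L/s*x"] by simp
    next
      case False
      have "1 - cos (L/s * x) \<le> 2" using cos_ge_minus_one[of "L/s*x"] by linarith
      also have "2 \<le> max 2 ((L/s)\<^sup>2)" by simp
      finally show ?thesis using False cos_le_one[of "L/s*x"] by simp
    qed
  qed
  have "levy_psi \<nu> (L / s) \<le> (LINT x|lborel. (L\<^sup>2 / 2) * (indicator {x. \<bar>x\<bar> \<le> s} x * (x\<^sup>2 / s\<^sup>2 * \<nu> x)) + 2 * (min 1 (x\<^sup>2 / s\<^sup>2) * \<nu> x))"
    unfolding levy_psi_def
  proof (rule integral_mono_AE[OF pI])
    show "integrable lborel (\<lambda>x. (L\<^sup>2 / 2) * (indicator {x. \<bar>x\<bar> \<le> s} x * (x\<^sup>2 / s\<^sup>2 * \<nu> x)) + 2 * (min 1 (x\<^sup>2 / s\<^sup>2) * \<nu> x))"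
      by (intro Bochner_Integration.integrable_add integrable_mult_right KI hI)
    show "AE x in lborel. (1 - cos (L / s * x)) * \<nu> x \<le> (L\<^sup>2 / 2) * (indicator {x. \<bar>x\<bar> \<le> s} x * (x\<^sup>2 / s\<^sup>2 * \<nu> x)) + 2 * (min 1 (x\<^sup>2 / s\<^sup>2) * \<nu> x)"
      using nn
    proof eventually_elim
      case (elim x)
      have c: "1 - cos (L / s * x) \<le> (L\<^sup>2 / 2) * (indicator {x. \<bar>x\<bar> \<le> s} x * (x\<^sup>2 / s\<^sup>2)) + 2 * min 1 (x\<^sup>2 / s\<^sup>2)"
      proof (cases "\<bar>x\<bar> \<le> s")
        case True
        have c1: "1 - cos (L/s * x) \<le> (L/s*x)^2/2" by (rule one_minus_cos_le)
        have c2: "(L/s*x)^2/2 = (L\<^sup>2 / 2) * (indicator {x. \<bar>x\<bar> \<le> s} x * (x\<^sup>2 / s\<^sup>2))"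
          using True by (simp add: power_mult_distrib power_divide)
        have c3: "0 \<le> min 1 (x\<^sup>2 / s\<^sup>2)" by simp
        from c1 c2 c3 show ?thesis by linarith
      next
        case False
        have "s < \<bar>x\<bar>" using False by simp
        hence "s\<^sup>2 < \<bar>x\<bar>\<^sup>2" using s by (intro power_strict_mono) auto
        hence "s\<^sup>2 < x\<^sup>2" by simp
        hence "min 1 (x\<^sup>2 / s\<^sup>2) = 1" using s by simp
        moreover have "1 - cos (L/s * x) \<le> 2" using cos_ge_minus_one[of "L/s*x"] by linarith
        ultimately show ?thesis using False by simp
      qed
      have "(1 - cos (L / s * x)) * \<nu> x \<le> ((L\<^sup>2 / 2) * (indicator {x. \<bar>x\<bar> \<le> s} x * (x\<^sup>2 / s\<^sup>2)) + 2 * min 1 (x\<^sup>2 / s\<^sup>2)) * \<nu> x"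
        using c elim by (rule mult_right_mono)
      then show ?case by (simp add: algebra_simps)
    qed
  qed
  also have "\<dots> = (L\<^sup>2 / 2) * levy_K \<nu> s + 2 * levy_h \<nu> s"
    unfolding levy_K_eq levy_h_def
    by (simp only: Bochner_Integration.integral_add[OF integrable_mult_right[OF KI] integrable_mult_right[OF hI]]
        integral_mult_right_zero)
  finally show ?thesis .
qed
lemma key_h_K:
  fixes \<nu> :: "real \<Rightarrow> real" and \<alpha> Cl s :: real
  assumes meas: "\<nu> \<in> borel_measurable borel" and nn: "AE x in lborel. 0 \<le> \<nu> x"
    and levy: "integrable lborel (\<lambda>x. min (x\<^sup>2) 1 * \<nu> x)"
    and al: "0 < \<alpha>" and Cl: "0 < Cl" "Cl \<le> 1"
    and lsc: "\<And>lam \<theta>. lam \<ge> 1 \<Longrightarrow> \<theta> \<ge> 0 \<Longrightarrow>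
        levy_psi \<nu> (lam * \<theta>) \<ge> Cl * lam powr \<alpha> * levy_psi \<nu> \<theta>"
    and s: "0 < s"
  shows "levy_h \<nu> s \<le> (2 / (Cl / pi\<^sup>2)) powr (2/\<alpha>) * levy_K \<nu> s"
proof -
  define X where "X = (25/10) / (Cl * (13/100))"
  define L where "L = X powr (1/\<alpha>)"
  have X1: "1 \<le> X" using Cl by (simp add: X_def field_simps)
  have L1: "1 \<le> L" unfolding L_def using X1 al by (simp add: ge_one_powr_ge_zero)
  have LX: "L powr \<alpha> = X" unfolding L_def using X1 al by (simp add: powr_powr)
  have L2: "L\<^sup>2 = X powr (2/\<alpha>)"
  proof -
    have "L\<^sup>2 = L * L" by (simp add: power2_eq_square)
    also have "\<dots> = X powr (1/\<alpha> + 1/\<alpha>)" unfolding L_def by (rule powr_add[symmetric])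
    finally show ?thesis by simp
  qed
  have psi0: "levy_psi \<nu> 0 = 0" by (simp add: levy_psi_def)
  have bnd: "levy_psi \<nu> t \<le> levy_psi \<nu> (L / s) / (Cl * X)" if t: "0 \<le> t" "t \<le> 1/s" for t
  proof (cases "t = 0")
    case True
    then show ?thesis using psi0 psi_nonneg[OF nn] Cl X1 by simp
  next
    case False
    hence tp: "0 < t" using t by simp
    define lam where "lam = L / (s * t)"
    have st: "s * t \<le> 1" using t s by (simp add: field_simps)
    have stp: "0 < s * t" using s tp by simp
    have llam: "L \<le> lam" unfolding lam_def using st stp L1 by (simp add: field_simps mult_left_le)
    have lam1: "1 \<le> lam" using L1 llam by simp
    have lt: "lam * t = L / s" unfolding lam_def using tp s by (simp add: field_simps)
    have "Cl * lam powr \<alpha> * levy_psi \<nu> t \<le> levy_psi \<nu> (L / s)" using lsc[OF lam1 t(1)] lt by simp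
    moreover have "X \<le> lam powr \<alpha>" using LX powr_mono2[of \<alpha> L lam] llam L1 al by simp
    hence "Cl * X * levy_psi \<nu> t \<le> Cl * lam powr \<alpha> * levy_psi \<nu> t"
      using Cl psi_nonneg[OF nn, of t] by (intro mult_right_mono mult_left_mono) auto
    ultimately have "Cl * X * levy_psi \<nu> t \<le> levy_psi \<nu> (L / s)" by linarith
    then show ?thesis using Cl X1 by (simp add: field_simps)
  qed
  have A: "(13/100) * levy_h \<nu> s \<le> levy_psi \<nu> (L / s) / (Cl * X)"
    by (rule avg_bound[OF meas nn levy s]) (use bnd in auto)
  have P: "(13/100) * levy_h \<nu> s * (Cl * X) \<le> levy_psi \<nu> (L / s)"
    using A Cl X1 by (simp add: field_simps)
  have e1: "(13/100) * (Cl * X) = 25/10" unfolding X_def using Cl by simp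
  have "(13/100) * levy_h \<nu> s * (Cl * X) = levy_h \<nu> s * ((13/100) * (Cl * X))" by (simp only: ac_simps)
  also have "\<dots> = levy_h \<nu> s * (25/10)" by (simp only: e1)
  finally have e2: "(13/100) * levy_h \<nu> s * (Cl * X) = levy_h \<nu> s * (25/10)" .
  have B: "(25/10) * levy_h \<nu> s \<le> levy_psi \<nu> (L / s)" using P e2 by linarith
  have C: "levy_psi \<nu> (L / s) \<le> (L\<^sup>2 / 2) * levy_K \<nu> s + 2 * levy_h \<nu> s"
    by (rule psi_upper[OF meas nn levy s])
  from B C have D: "levy_h \<nu> s \<le> L\<^sup>2 * levy_K \<nu> s" by linarith
  have "X \<le> 2 / (Cl / pi\<^sup>2)"
  proof -
    have "3.14 \<le> pi" using pi_approx by simp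
    hence "3.14 * 3.14 \<le> pi * pi" by (intro mult_mono) auto
    hence "(25/10) / (13/100) \<le> 2 * pi\<^sup>2" by (simp add: power2_eq_square)
    hence "(25/10) / (13/100) / Cl \<le> 2 * pi\<^sup>2 / Cl" using Cl by (intro divide_right_mono) auto
    moreover have "X = (25/10) / (13/100) / Cl" unfolding X_def by simp
    moreover have "2 / (Cl / pi\<^sup>2) = 2 * pi\<^sup>2 / Cl" by simp
    ultimately show ?thesis by simp
  qed
  hence "L\<^sup>2 \<le> (2 / (Cl / pi\<^sup>2)) powr (2/\<alpha>)" unfolding L2 using X1 al by (intro powr_mono2) auto
  hence "L\<^sup>2 * levy_K \<nu> s \<le> (2 / (Cl / pi\<^sup>2)) powr (2/\<alpha>) * levy_K \<nu> s"
    using K_nonneg[OF nn] by (intro mult_right_mono) auto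
  with D show ?thesis by linarith
qed
theorem lemma2p1:
  fixes \<nu> \<nu>' :: "real \<Rightarrow> real"
    and \<mu> \<mu>' :: "real \<Rightarrow> real \<Rightarrow> real"
    and \<alpha> \<beta> Cl Cu \<eta>4 \<delta>0 :: real
  assumes nu_meas: "\<nu> \<in> borel_measurable borel"
    and nu_nonneg: "\<And>x. x \<noteq> 0 \<Longrightarrow> \<nu> x \<ge> 0"
    and nu_sym: "\<And>x. x \<noteq> 0 \<Longrightarrow> \<nu> (-x) = \<nu> x"
    and nu_levy: "integrable lborel (\<lambda>x. min (x\<^sup>2) 1 * \<nu> x)"
    and nu_infinite: "(\<integral>\<^sup>+ x. ennreal (\<nu> x) \<partial>lborel) = \<infinity>"
    and eta4: "\<eta>4 > 0"
    and nu_C1: "\<And>x. x \<in> {0<..<\<eta>4} \<Longrightarrow> (\<nu> has_real_derivative \<nu>' x) (at x)"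
    and nu'_cont: "continuous_on {0<..<\<eta>4} \<nu>'"
    and nu'_neg: "\<And>x. x \<in> {0<..<\<eta>4} \<Longrightarrow> \<nu>' x < 0"
    and nu'_mono: "\<And>x y. 0 < x \<Longrightarrow> x \<le> y \<Longrightarrow> y < \<eta>4 \<Longrightarrow> - \<nu>' y / y \<le> - \<nu>' x / x"
    and alpha_beta: "0 < \<alpha>" "\<alpha> \<le> \<beta>" "\<beta> < 2"
    and Cl_pos: "Cl > 0" and Cu_pos: "Cu > 0"
    and lower_scaling: "\<And>lam \<theta>. lam \<ge> 1 \<Longrightarrow> \<theta> \<ge> 0 \<Longrightarrow>
        levy_psi \<nu> (lam * \<theta>) \<ge> Cl * lam powr \<alpha> * levy_psi \<nu> \<theta>"
    and upper_scaling: "\<And>lam \<theta>. lam \<ge> 1 \<Longrightarrow> \<theta> \<ge> 1 \<Longrightarrow>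
        levy_psi \<nu> (lam * \<theta>) \<le> Cu * lam powr \<beta> * levy_psi \<nu> \<theta>"
    and delta0: "0 < \<delta>0" "\<delta>0 \<le> 1/24"
    and mu_eq: "\<And>\<delta> x. 0 < \<delta> \<Longrightarrow> \<delta> \<le> \<delta>0 \<Longrightarrow> x \<in> {0<..\<delta>} \<Longrightarrow> \<mu> \<delta> x = \<nu> x"
    and mu_mid: "\<And>\<delta> x. 0 < \<delta> \<Longrightarrow> \<delta> \<le> \<delta>0 \<Longrightarrow> x \<in> {\<delta><..<2*\<delta>} \<Longrightarrow>
        0 \<le> \<mu> \<delta> x \<and> \<mu> \<delta> x \<le> \<nu> x"
    and mu_zero: "\<And>\<delta> x. 0 < \<delta> \<Longrightarrow> \<delta> \<le> \<delta>0 \<Longrightarrow> x \<ge> 2*\<delta> \<Longrightarrow> \<mu> \<delta> x = 0"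
    and mu_C1: "\<And>\<delta> x. 0 < \<delta> \<Longrightarrow> \<delta> \<le> \<delta>0 \<Longrightarrow> x > 0 \<Longrightarrow>
        (\<mu> \<delta> has_real_derivative \<mu>' \<delta> x) (at x)"
    and mu'_cont: "\<And>\<delta>. 0 < \<delta> \<Longrightarrow> \<delta> \<le> \<delta>0 \<Longrightarrow> continuous_on {0<..} (\<mu>' \<delta>)"
    and mu'_nonpos: "\<And>\<delta> x. 0 < \<delta> \<Longrightarrow> \<delta> \<le> \<delta>0 \<Longrightarrow> x > 0 \<Longrightarrow> \<mu>' \<delta> x \<le> 0"
    and mu'_mono: "\<And>\<delta> x y. 0 < \<delta> \<Longrightarrow> \<delta> \<le> \<delta>0 \<Longrightarrow> 0 < x \<Longrightarrow> x \<le> y \<Longrightarrow>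
        - \<mu>' \<delta> y / y \<le> - \<mu>' \<delta> x / x"
    and mu_sym: "\<And>\<delta> x. 0 < \<delta> \<Longrightarrow> \<delta> \<le> \<delta>0 \<Longrightarrow> x \<noteq> 0 \<Longrightarrow> \<mu> \<delta> (-x) = \<mu> \<delta> x"
    and delta: "0 < \<delta>" "\<delta> \<le> \<delta>0"
    and r_pos: "r > 0"
  shows "levy_K \<nu> r \<le> (2 / (Cl / pi\<^sup>2)) powr (2/\<alpha>) * (max (r\<^sup>2) (\<delta>\<^sup>2) / \<delta>\<^sup>2) * levy_K (\<mu> \<delta>) r
     \<and> levy_h (\<mu> \<delta>) r \<le> levy_h \<nu> r
     \<and> levy_h \<nu> r \<le> (2 / (Cl / pi\<^sup>2)) powr (4/\<alpha>) * (max (r\<^sup>2) (\<delta>\<^sup>2) / \<delta>\<^sup>2) * levy_K (\<mu> \<delta>) r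
     \<and> levy_h (\<mu> \<delta>) r \<le> 4 * (2 / (Cl / pi\<^sup>2)) powr (4/\<alpha>) * levy_K (\<mu> \<delta>) r"
proof -
  note nu_meas[measurable]
  have nn: "AE x in lborel. 0 \<le> \<nu> x"
    using AE_lborel_singleton[of 0] by eventually_elim (rule nu_nonneg)
  define m where "m = \<mu> \<delta>"
  have m_pos: "0 \<le> m x \<and> m x \<le> \<nu> x" if "0 < x" for x
  proof -
    consider "x \<le> \<delta>" | "\<delta> < x \<and> x < 2*\<delta>" | "2*\<delta> \<le> x" by linarith
    then show ?thesis
    proof cases
      case 1 then show ?thesis using mu_eq[OF delta, of x] nu_nonneg[of x] that by (simp add: m_def)
    next
      case 2 then show ?thesis using mu_mid[OF delta, of x] by (simp add: m_def)
    next
      case 3 then show ?thesis using mu_zero[OF delta, of x] nu_nonneg[of x] that by (simp add: m_def)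
    qed
  qed
  have m_bnd: "0 \<le> m x \<and> m x \<le> \<nu> x" if "x \<noteq> 0" for x
  proof (cases "0 < x")
    case True then show ?thesis by (rule m_pos)
  next
    case False
    hence "0 < -x" using that by simp
    from m_pos[OF this] show ?thesis using mu_sym[OF delta, of x] nu_sym[of x] that by (simp add: m_def)
  qed
  have m_eq: "m x = \<nu> x" if "x \<noteq> 0" "\<bar>x\<bar> \<le> \<delta>" for x
  proof (cases "0 < x")
    case True then show ?thesis using mu_eq[OF delta, of x] that by (simp add: m_def)
  next
    case False
    hence "-x \<in> {0<..\<delta>}" using that by auto
    from mu_eq[OF delta this] show ?thesis using mu_sym[OF delta, of x] nu_sym[of x] that by (simp add: m_def)
  qed
  have m_zero: "m x = 0" if "2*\<delta> \<le> \<bar>x\<bar>" for x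
  proof (cases "0 < x")
    case True then show ?thesis using mu_zero[OF delta, of x] that by (simp add: m_def)
  next
    case False
    hence "2*\<delta> \<le> -x" using that by auto
    from mu_zero[OF delta this] show ?thesis using mu_sym[OF delta, of x] that delta by (simp add: m_def)
  qed
  have m_meas: "m \<in> borel_measurable borel"
  proof -
    have "continuous_on {0<..} m"
    proof (rule continuous_at_imp_continuous_on, intro ballI)
      fix x :: real assume "x \<in> {0<..}"
      then show "isCont m x" using mu_C1[OF delta, of x] unfolding m_def
        by (auto intro: DERIV_isCont)
    qed
    hence g1: "(\<lambda>x. indicator {0<..} x *\<^sub>R m x) \<in> borel_measurable borel"
      by (intro borel_measurable_continuous_on_indicator) auto
    have g2: "(\<lambda>x. indicator {0<..} (-x) *\<^sub>R m (-x)) \<in> borel_measurable borel"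
      using measurable_compose[OF borel_measurable_uminus[OF measurable_ident_sets[OF refl]] g1] by simp
    have eq: "m = (\<lambda>x. indicator {0<..} x *\<^sub>R m x + indicator {0<..} (-x) *\<^sub>R m (-x) + indicator {0} x * m 0)"
    proof
      fix x :: real
      show "m x = indicator {0<..} x *\<^sub>R m x + indicator {0<..} (-x) *\<^sub>R m (-x) + indicator {0} x * m 0"
        using mu_sym[OF delta, of "-x"] by (cases "0 < x"; cases "x = 0") (auto simp: m_def)
    qed
    show ?thesis by (subst eq) (intro borel_measurable_add g1 g2 borel_measurable_times; simp)
  qed
  note m_meas[measurable]
  have nnm: "AE x in lborel. 0 \<le> m x"
    using AE_lborel_singleton[of 0] by eventually_elim (use m_bnd in auto)
  have levy_m: "integrable lborel (\<lambda>x. min (x\<^sup>2) 1 * m x)"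
  proof (rule Bochner_Integration.integrable_bound[OF nu_levy])
    show "(\<lambda>x. min (x\<^sup>2) 1 * m x) \<in> borel_measurable lborel" by simp
    show "AE x in lborel. norm (min (x\<^sup>2) 1 * m x) \<le> norm (min (x\<^sup>2) 1 * \<nu> x)"
      using AE_lborel_singleton[of 0]
    proof eventually_elim
      case (elim x)
      then show ?case using m_bnd[OF elim] by (auto simp: abs_mult intro!: mult_left_mono)
    qed
  qed
  define c1 where "c1 = (2 / (Cl / pi\<^sup>2)) powr (2/\<alpha>)"
  define c2 where "c2 = (2 / (Cl / pi\<^sup>2)) powr (4/\<alpha>)"
  define M where "M = max (r\<^sup>2) (\<delta>\<^sup>2) / \<delta>\<^sup>2"
  have c1_nn: "0 \<le> c1" and c2_nn: "0 \<le> c2" by (simp_all add: c1_def c2_def)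
  have M_nn: "0 \<le> M" unfolding M_def by (intro divide_nonneg_nonneg) (auto simp: le_max_iff_disj)
  have Kd_nn: "0 \<le> levy_K m r" by (rule K_nonneg[OF nnm])
  have hd_le: "levy_h m r \<le> levy_h \<nu> r"
    unfolding levy_h_def
  proof (rule integral_mono_AE[OF h_integrable[OF m_meas nnm levy_m r_pos] h_integrable[OF nu_meas nn nu_levy r_pos]])
    show "AE x in lborel. min 1 (x\<^sup>2 / r\<^sup>2) * m x \<le> min 1 (x\<^sup>2 / r\<^sup>2) * \<nu> x"
      using AE_lborel_singleton[of 0]
    proof eventually_elim
      case (elim x)
      then show ?case using m_bnd[OF elim] by (intro mult_left_mono) auto
    qed
  qed
  have hd_nn: "0 \<le> levy_h m r" by (rule h_nonneg[OF nnm])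
  have main: "levy_h \<nu> r \<le> c1 * M * levy_K m r \<and> c1 \<le> c2 \<and> 1 \<le> 4 * c2" if Cl1: "Cl \<le> 1"
  proof -
    have key: "levy_h \<nu> s \<le> c1 * levy_K \<nu> s" if "0 < s" for s
      unfolding c1_def by (rule key_h_K[OF nu_meas nn nu_levy alpha_beta(1) Cl_pos Cl1 lower_scaling that])
    have base: "1 \<le> 2 / (Cl / pi\<^sup>2)"
    proof -
      have "2 * 2 \<le> pi * pi" using mult_mono[OF pi_ge_two pi_ge_two] by simp
      hence "1 \<le> 2 * pi\<^sup>2" by (simp add: power2_eq_square)
      also have "\<dots> \<le> 2 * pi\<^sup>2 / Cl" using Cl1 Cl_pos by (simp add: field_simps)
      finally show ?thesis by simp
    qed
    have c1_1: "1 \<le> c1" unfolding c1_def using base alpha_beta(1) by (intro ge_one_powr_ge_zero) auto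
    have c2_eq: "c2 = c1 * c1" unfolding c1_def c2_def
      by (subst powr_add[symmetric]) simp
    have c12: "c1 \<le> c2" unfolding c2_eq using c1_1 by simp
    have c2_1: "1 \<le> 4 * c2" using c12 c1_1 by simp
    have Q: "levy_h \<nu> r \<le> c1 * M * levy_K m r"
    proof (cases "r \<le> \<delta>")
      case True
      have M1: "M = 1" unfolding M_def using True r_pos delta
        by (simp add: power_mono max_def)
      have "levy_K m r = levy_K \<nu> r"
        unfolding levy_K_eq
      proof (rule integral_cong_AE)
        show "(\<lambda>x. indicator {x. \<bar>x\<bar> \<le> r} x * (x\<^sup>2 / r\<^sup>2 * m x)) \<in> borel_measurable lborel" by measurable
        show "(\<lambda>x. indicator {x. \<bar>x\<bar> \<le> r} x * (x\<^sup>2 / r\<^sup>2 * \<nu> x)) \<in> borel_measurable lborel" by measurable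
        show "AE x in lborel. indicator {x. \<bar>x\<bar> \<le> r} x * (x\<^sup>2 / r\<^sup>2 * m x) = indicator {x. \<bar>x\<bar> \<le> r} x * (x\<^sup>2 / r\<^sup>2 * \<nu> x)"
          using AE_lborel_singleton[of 0]
        proof eventually_elim
          case (elim x)
          show ?case
          proof (cases "\<bar>x\<bar> \<le> r")
            case T2: True
            then show ?thesis using m_eq[OF elim] True by simp
          next
            case False then show ?thesis by simp
          qed
        qed
      qed
      then show ?thesis using key[OF r_pos] M1 by simp
    next
      case False
      have M1: "M = r\<^sup>2 / \<delta>\<^sup>2" unfolding M_def using False r_pos delta
        by (simp add: power_mono max_def)
      have "(\<delta>\<^sup>2 / r\<^sup>2) * levy_K \<nu> \<delta> \<le> levy_K m r"
        unfolding levy_K_eq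
        apply (subst integral_mult_right_zero[symmetric])
      proof (rule integral_mono_AE)
        show "integrable lborel (\<lambda>x. \<delta>\<^sup>2 / r\<^sup>2 * (indicator {x. \<bar>x\<bar> \<le> \<delta>} x * (x\<^sup>2 / \<delta>\<^sup>2 * \<nu> x)))"
          by (intro integrable_mult_right K_integrable[OF nu_meas nn nu_levy delta(1)])
        show "integrable lborel (\<lambda>x. indicator {x. \<bar>x\<bar> \<le> r} x * (x\<^sup>2 / r\<^sup>2 * m x))"
          by (rule K_integrable[OF m_meas nnm levy_m r_pos])
        show "AE x in lborel. \<delta>\<^sup>2 / r\<^sup>2 * (indicator {x. \<bar>x\<bar> \<le> \<delta>} x * (x\<^sup>2 / \<delta>\<^sup>2 * \<nu> x)) \<le> indicator {x. \<bar>x\<bar> \<le> r} x * (x\<^sup>2 / r\<^sup>2 * m x)"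
          using AE_lborel_singleton[of 0]
        proof eventually_elim
          case (elim x)
          show ?case
          proof (cases "\<bar>x\<bar> \<le> \<delta>")
            case True
            hence "\<bar>x\<bar> \<le> r" using False by simp
            then show ?thesis using True m_eq[OF elim True] delta by (simp add: field_simps)
          next
            case F2: False
            then show ?thesis using m_bnd[OF elim] by simp
          qed
        qed
      qed
      hence Kd: "levy_K \<nu> \<delta> \<le> (r\<^sup>2 / \<delta>\<^sup>2) * levy_K m r"
        using delta r_pos by (simp add: field_simps)
      have "levy_h \<nu> r \<le> levy_h \<nu> \<delta>"
        by (rule h_mono[OF nu_meas nn nu_levy delta(1)]) (use False in simp)
      also have "\<dots> \<le> c1 * levy_K \<nu> \<delta>" by (rule key[OF delta(1)])
      also have "\<dots> \<le> c1 * ((r\<^sup>2 / \<delta>\<^sup>2) * levy_K m r)" using Kd c1_1 by (intro mult_left_mono) auto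
      finally show ?thesis using M1 by (simp add: mult.assoc)
    qed
    show ?thesis using Q c12 c2_1 by blast
  qed

  have part2: "levy_h m r \<le> levy_h \<nu> r" by (rule hd_le)
  show ?thesis
  proof (cases "Cl \<le> 1")
    case True
    note mn = main[OF True]
    have p1: "levy_K \<nu> r \<le> c1 * M * levy_K m r"
      using K_le_h[OF nu_meas nn nu_levy r_pos] mn by linarith
    have "c1 * M * levy_K m r \<le> c2 * M * levy_K m r"
      using mn M_nn Kd_nn by (intro mult_right_mono) auto
    hence p3: "levy_h \<nu> r \<le> c2 * M * levy_K m r" using mn by linarith
    have p4: "levy_h m r \<le> 4 * c2 * levy_K m r"
    proof (cases "r \<le> 2 * \<delta>")
      case True
      have "r\<^sup>2 \<le> (2*\<delta>)\<^sup>2" using True r_pos by (intro power_mono) auto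
      hence "M \<le> 4" unfolding M_def using delta by (auto simp: field_simps power_mult_distrib)
      hence "c2 * M * levy_K m r \<le> c2 * 4 * levy_K m r"
        using c2_nn Kd_nn by (intro mult_right_mono mult_left_mono) auto
      then show ?thesis using p3 hd_le by (simp add: mult.commute mult.left_commute)
    next
      case False
      have "levy_h m r = levy_K m r"
        unfolding levy_h_def levy_K_eq
      proof (rule Bochner_Integration.integral_cong[OF refl])
        fix x :: real
        show "min 1 (x\<^sup>2 / r\<^sup>2) * m x = indicator {x. \<bar>x\<bar> \<le> r} x * (x\<^sup>2 / r\<^sup>2 * m x)"
        proof (cases "\<bar>x\<bar> \<le> r")
          case True
          have "x\<^sup>2 \<le> r\<^sup>2" using power_mono[OF True abs_ge_zero, of 2] by simp
          hence "x\<^sup>2 / r\<^sup>2 \<le> 1" using r_pos by simp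
          then show ?thesis using True by (simp add: min_def)
        next
          case F2: False
          then show ?thesis using m_zero[of x] False by simp
        qed
      qed
      moreover have "levy_K m r \<le> 4 * c2 * levy_K m r"
        using mn Kd_nn by (simp add: mult_le_cancel_right1)
      ultimately show ?thesis by simp
    qed
    show ?thesis using p1 p3 p4 part2 unfolding m_def c1_def c2_def M_def by blast
  next
    case False
    have psi0: "levy_psi \<nu> t = 0" if "0 \<le> t" for t
    proof -
      have "Cl * 1 powr \<alpha> * levy_psi \<nu> t \<le> levy_psi \<nu> (1 * t)" by (rule lower_scaling) (use that in auto)
      hence "Cl * levy_psi \<nu> t \<le> levy_psi \<nu> t" by simp
      moreover have "0 \<le> levy_psi \<nu> t" by (rule psi_nonneg[OF nn])
      ultimately have "(Cl - 1) * levy_psi \<nu> t \<le> 0" by (simp add: algebra_simps)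
      hence "levy_psi \<nu> t \<le> 0" using False by (simp add: mult_le_0_iff)
      then show ?thesis using \<open>0 \<le> levy_psi \<nu> t\<close> by linarith
    qed
    have h0: "levy_h \<nu> r \<le> 0"
      using avg_bound[OF nu_meas nn nu_levy r_pos, of 0] psi0 by simp
    have q1: "0 \<le> c1 * M * levy_K m r" using c1_nn M_nn Kd_nn by (intro mult_nonneg_nonneg)
    have q2: "0 \<le> c2 * M * levy_K m r" using c2_nn M_nn Kd_nn by (intro mult_nonneg_nonneg)
    have q3: "0 \<le> 4 * c2 * levy_K m r" using c2_nn Kd_nn by (intro mult_nonneg_nonneg) auto
    have p1: "levy_K \<nu> r \<le> c1 * M * levy_K m r"
      using K_le_h[OF nu_meas nn nu_levy r_pos] h0 q1 by linarith
    have p3: "levy_h \<nu> r \<le> c2 * M * levy_K m r"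
      using h0 q2 by linarith
    have p4: "levy_h m r \<le> 4 * c2 * levy_K m r"
      using h0 hd_le q3 by linarith
    show ?thesis using p1 p3 p4 part2 unfolding m_def c1_def c2_def M_def by blast
  qed
qed

end
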